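(* Let $p$ be a prime and $G$ a finite abelian $p$-group. Then $G$ is a $2$-closed group if and only if $G$ is cyclic.
   Context: Permutations act on the right. For $X\leq{\rm Sym}(\Omega)$, the $2$-closure of $X$ on $\Omega$ is $X^{(2),\Omega}=\{\theta\in{\rm Sym}(\Omega)\mid \forall \alpha,\beta\in\Omega\ \exists g\in X:\ \alpha^\theta=\alpha^g,\ \beta^\theta=\beta^g\}$. An abstract group $G$ is called a $2$-closed group if $H=H^{(2),\Omega}$ for every set $\Omega$ and every subgroup $H\leq{\rm Sym}(\Omega)$ with $H\cong G$. *)

theory Defs
  imports "HOL-Algebra.Algebra"
begin

text \<open>Sym(Omega) is BijGroup Omega (bijections of Omega, extensional outside Omega).
  The 2-closure of a permutation group X on Omega.\<close>
definition two_closure :: "'b set \<Rightarrow> ('b \<Rightarrow> 'b) set \<Rightarrow> ('b \<Rightarrow> 'b) set" where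
  "two_closure Om K = {th \<in> Bij Om. \<forall>a\<in>Om. \<forall>b\<in>Om. \<exists>f\<in>K. th a = f a \<and> th b = f b}"

definition two_closed_group :: "'b itself \<Rightarrow> ('a, 'c) monoid_scheme \<Rightarrow> bool" where
  "two_closed_group (_::'b itself) G \<longleftrightarrow>
     (\<forall>(Om::'b set) H. subgroup H (BijGroup Om) \<and> (BijGroup Om)\<lparr>carrier := H\<rparr> \<cong> G
        \<longrightarrow> two_closure Om H = H)"

end

theory Submission
  imports Defs
begin


lemma transport_not_closed:
  fixes G :: "('a, 'c) monoid_scheme" and Om0 :: "'d set" and act :: "'a \<Rightarrow> 'd \<Rightarrow> 'd"
    and th :: "'d \<Rightarrow> 'd"
  assumes inf: "infinite (UNIV :: 'b set)" and grp: "group G" and fin: "finite Om0"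
    and closed: "\<And>g w. g \<in> carrier G \<Longrightarrow> w \<in> Om0 \<Longrightarrow> act g w \<in> Om0"
    and one: "\<And>w. w \<in> Om0 \<Longrightarrow> act \<one>\<^bsub>G\<^esub> w = w"
    and mult: "\<And>g h w. g \<in> carrier G \<Longrightarrow> h \<in> carrier G \<Longrightarrow> w \<in> Om0 \<Longrightarrow>
                 act (g \<otimes>\<^bsub>G\<^esub> h) w = act g (act h w)"
    and faith: "\<And>g h. g \<in> carrier G \<Longrightarrow> h \<in> carrier G \<Longrightarrow> (\<forall>w\<in>Om0. act g w = act h w) \<Longrightarrow> g = h"
    and thbij: "bij_betw th Om0 Om0"
    and thcl: "\<And>u v. u \<in> Om0 \<Longrightarrow> v \<in> Om0 \<Longrightarrow> \<exists>g\<in>carrier G. th u = act g u \<and> th v = act g v"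
    and thnot: "\<And>g. g \<in> carrier G \<Longrightarrow> \<exists>w\<in>Om0. th w \<noteq> act g w"
  shows "\<not> two_closed_group TYPE('b) G"
proof -
  interpret G: group G by (rule grp)
  obtain f :: "nat \<Rightarrow> 'b" where f: "inj f" using infinite_countable_subset[OF inf] by blast
  obtain n :: "'d \<Rightarrow> nat" where n: "inj_on n Om0" using fin finite_imp_inj_to_nat_seg by blast
  define e where "e = f \<circ> n"
  have e: "inj_on e Om0" unfolding e_def using f n by (simp add: comp_inj_on inj_on_subset)
  define Om where "Om = e ` Om0"
  have ebij: "bij_betw e Om0 Om" using e Om_def by (simp add: bij_betw_def)
  define ei where "ei = inv_into Om0 e"
  have eibij: "bij_betw ei Om Om0" unfolding ei_def using ebij by (rule bij_betw_inv_into)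
  have eie: "\<And>w. w \<in> Om0 \<Longrightarrow> ei (e w) = w" unfolding ei_def using e by simp
  have eei: "\<And>y. y \<in> Om \<Longrightarrow> e (ei y) = y" unfolding ei_def Om_def using e by (simp add: f_inv_into_f)
  have eiin: "\<And>y. y \<in> Om \<Longrightarrow> ei y \<in> Om0" using eibij bij_betwE by blast
  define tr :: "('d \<Rightarrow> 'd) \<Rightarrow> ('b \<Rightarrow> 'b)" where "tr = (\<lambda>k. restrict (\<lambda>y. e (k (ei y))) Om)"
  have trBij: "tr k \<in> Bij Om" if "bij_betw k Om0 Om0" for k
  proof -
    have "bij_betw (e \<circ> k \<circ> ei) Om Om"
      using eibij that ebij by (meson bij_betw_trans)
    then have "bij_betw (tr k) Om Om" unfolding tr_def
      by (rule bij_betw_cong[THEN iffD1, rotated]) auto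
    then show ?thesis unfolding Bij_def tr_def by auto
  qed
  have actbij: "bij_betw (act g) Om0 Om0" if g: "g \<in> carrier G" for g
  proof (rule bij_betwI[where g = "act (inv\<^bsub>G\<^esub> g)"])
    show "act g \<in> Om0 \<rightarrow> Om0" using closed g by auto
    show "act (inv\<^bsub>G\<^esub> g) \<in> Om0 \<rightarrow> Om0" using closed g by auto
    show "act (inv\<^bsub>G\<^esub> g) (act g x) = x" if "x \<in> Om0" for x
      using mult[of "inv\<^bsub>G\<^esub> g" g x] one[of x] that g by simp
    show "act g (act (inv\<^bsub>G\<^esub> g) y) = y" if "y \<in> Om0" for y
      using mult[of g "inv\<^bsub>G\<^esub> g" y] one[of y] that g by simp
  qed
  define chi where "chi = (\<lambda>g. tr (act g))"
  have chiB: "chi g \<in> Bij Om" if "g \<in> carrier G" for g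
    unfolding chi_def using trBij actbij that by blast
  have hom: "chi \<in> hom G (BijGroup Om)"
  proof (rule homI)
    show "chi x \<in> carrier (BijGroup Om)" if "x \<in> carrier G" for x
      using chiB that by (simp add: BijGroup_def)
    show "chi (x \<otimes>\<^bsub>G\<^esub> y) = chi x \<otimes>\<^bsub>BijGroup Om\<^esub> chi y" if "x \<in> carrier G" "y \<in> carrier G" for x y
    proof -
      have "chi (x \<otimes>\<^bsub>G\<^esub> y) = compose Om (chi x) (chi y)"
      proof (rule ext)
        fix b show "chi (x \<otimes>\<^bsub>G\<^esub> y) b = compose Om (chi x) (chi y) b"
        proof (cases "b \<in> Om")
          case True
          have "act y (ei b) \<in> Om0" using closed that eiin True by blast
          then have "e (act y (ei b)) \<in> Om" unfolding Om_def by blast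
          then show ?thesis using True that mult eiin eie \<open>act y (ei b) \<in> Om0\<close>
            by (simp add: chi_def tr_def compose_def)
        qed (simp add: chi_def tr_def compose_def)
      qed
      then show ?thesis using chiB that by (simp add: BijGroup_def)
    qed
  qed
  have chiinj: "inj_on chi (carrier G)"
  proof (rule inj_onI)
    fix g h assume gh: "g \<in> carrier G" "h \<in> carrier G" "chi g = chi h"
    have "\<forall>w\<in>Om0. act g w = act h w"
    proof
      fix w assume w: "w \<in> Om0"
      have "e w \<in> Om" using w Om_def by blast
      then have "chi g (e w) = chi h (e w)" using gh by simp
      then have "e (act g w) = e (act h w)" using \<open>e w \<in> Om\<close> eie w by (simp add: chi_def tr_def)
      then show "act g w = act h w" using e closed gh w by (meson inj_onD)
    qed
    then show "g = h" using faith gh by blast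
  qed
  define H where "H = chi ` carrier G"
  have gh: "group_hom G (BijGroup Om) chi"
    using hom grp group_BijGroup by (simp add: group_hom_def group_hom_axioms_def)
  have sub: "subgroup H (BijGroup Om)" unfolding H_def using group_hom.img_is_subgroup[OF gh] .
  have iso: "chi \<in> iso G ((BijGroup Om)\<lparr>carrier := H\<rparr>)"
    using hom chiinj unfolding iso_def hom_def H_def bij_betw_def by (auto simp: BijGroup_def)
  have isoc: "(BijGroup Om)\<lparr>carrier := H\<rparr> \<cong> G"
    using iso G.iso_sym unfolding is_iso_def by blast
  define Th where "Th = tr th"
  have ThB: "Th \<in> Bij Om" unfolding Th_def using trBij thbij by blast
  have Thcl: "Th \<in> two_closure Om H"
    unfolding two_closure_def
  proof (intro CollectI conjI ballI ThB)
    fix a b assume ab: "a \<in> Om" "b \<in> Om"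
    obtain g where g: "g \<in> carrier G" "th (ei a) = act g (ei a)" "th (ei b) = act g (ei b)"
      using thcl eiin ab by blast
    show "\<exists>f\<in>H. Th a = f a \<and> Th b = f b"
      using g ab unfolding H_def Th_def chi_def tr_def by auto
  qed
  have ThnH: "Th \<notin> H"
  proof
    assume "Th \<in> H"
    then obtain g where g: "g \<in> carrier G" "Th = chi g" unfolding H_def by blast
    obtain w where w: "w \<in> Om0" "th w \<noteq> act g w" using thnot g by blast
    have "e w \<in> Om" using w Om_def by blast
    then have "Th (e w) = chi g (e w)" using g by simp
    then have "e (th w) = e (act g w)" using \<open>e w \<in> Om\<close> eie w by (simp add: Th_def chi_def tr_def)
    moreover have "th w \<in> Om0" using thbij w bij_betwE by blast
    ultimately show False using e closed g w by (meson inj_onD)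
  qed
  show ?thesis unfolding two_closed_group_def
    using sub isoc Thcl ThnH by blast
qed



lemma coset_construction:
  fixes G :: "('a, 'c) monoid_scheme" and S :: "nat \<Rightarrow> 'a set"
  assumes inf: "infinite (UNIV :: 'b set)" and cg: "comm_group G" and fin: "finite (carrier G)"
    and sub: "\<And>i. subgroup (S i) G"
    and x: "x \<in> S 0" and b: "b \<in> S 1" and xb: "inv\<^bsub>G\<^esub> x \<otimes>\<^bsub>G\<^esub> b \<in> S 2"
    and AD: "S 0 \<inter> S 1 = {\<one>\<^bsub>G\<^esub>}" and xZ: "x \<notin> S 2"
  shows "\<not> two_closed_group TYPE('b) G"
proof -
  interpret G: comm_group G by (rule cg)
  have Sc: "S i \<subseteq> carrier G" for i using sub subgroup.subset by blast
  have Sc': "c \<in> carrier G" if "c \<in> S i" for c i using Sc that by blast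
  have xc: "x \<in> carrier G" using x Sc by blast
  have bc: "b \<in> carrier G" using b Sc by blast
  define Om0 where "Om0 = {(i, (\<lambda>c. h \<otimes>\<^bsub>G\<^esub> c) ` S i) | i h. i < (3::nat) \<and> h \<in> carrier G}"
  define act where "act = (\<lambda>g (w :: nat \<times> 'a set). (fst w, (\<lambda>c. g \<otimes>\<^bsub>G\<^esub> c) ` snd w))"
  define th where "th = (\<lambda>w :: nat \<times> 'a set. if fst w = 2 then act x w else w)"
  have actt: "act g (i, (\<lambda>c. h \<otimes>\<^bsub>G\<^esub> c) ` S i) = (i, (\<lambda>c. (g \<otimes>\<^bsub>G\<^esub> h) \<otimes>\<^bsub>G\<^esub> c) ` S i)"
    if "g \<in> carrier G" "h \<in> carrier G" for g h i
    unfolding act_def fst_conv snd_conv image_image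
    using that Sc by (auto intro!: image_cong) (metis G.m_assoc subsetD)
  have fin0: "finite Om0"
  proof -
    have "Om0 \<subseteq> (\<lambda>(i,h). (i, (\<lambda>c. h \<otimes>\<^bsub>G\<^esub> c) ` S i)) ` ({..<3} \<times> carrier G)"
      unfolding Om0_def by auto
    then show ?thesis using fin by (meson finite_SigmaI finite_imageI finite_lessThan finite_subset)
  qed
  have closed: "act g w \<in> Om0" if "g \<in> carrier G" "w \<in> Om0" for g w
    using that actt unfolding Om0_def by auto (metis G.m_closed)
  have one: "act \<one>\<^bsub>G\<^esub> w = w" if "w \<in> Om0" for w
    using that actt unfolding Om0_def by auto
  have mult: "act (g \<otimes>\<^bsub>G\<^esub> h) w = act g (act h w)" if "g \<in> carrier G" "h \<in> carrier G" "w \<in> Om0" for g h w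
    using that actt unfolding Om0_def by (auto simp: G.m_assoc)
  have fixS: "act y (i, (\<lambda>c. h \<otimes>\<^bsub>G\<^esub> c) ` S i) = (i, (\<lambda>c. h \<otimes>\<^bsub>G\<^esub> c) ` S i)"
    if "y \<in> S i" "h \<in> carrier G" for y h i
  proof -
    have yc: "y \<in> carrier G" using that Sc by blast
    have "(\<lambda>c. (y \<otimes>\<^bsub>G\<^esub> h) \<otimes>\<^bsub>G\<^esub> c) ` S i = (\<lambda>c. h \<otimes>\<^bsub>G\<^esub> c) ` S i"
    proof -
      have "(\<lambda>c. (y \<otimes>\<^bsub>G\<^esub> h) \<otimes>\<^bsub>G\<^esub> c) ` S i = (\<lambda>c. h \<otimes>\<^bsub>G\<^esub> c) ` ((\<lambda>c. y \<otimes>\<^bsub>G\<^esub> c) ` S i)"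
        unfolding image_image
      proof (rule image_cong[OF refl])
        fix c assume "c \<in> S i"
        then have cc: "c \<in> carrier G" using Sc' by blast
        show "y \<otimes>\<^bsub>G\<^esub> h \<otimes>\<^bsub>G\<^esub> c = h \<otimes>\<^bsub>G\<^esub> (y \<otimes>\<^bsub>G\<^esub> c)"
          using G.m_assoc[OF yc that(2) cc] G.m_lcomm[OF yc that(2) cc] by simp
      qed
      moreover have "(\<lambda>c. y \<otimes>\<^bsub>G\<^esub> c) ` S i = S i"
      proof
        show "(\<lambda>c. y \<otimes>\<^bsub>G\<^esub> c) ` S i \<subseteq> S i" using subgroup.m_closed[OF sub[of i] that(1)] by blast
        show "S i \<subseteq> (\<lambda>c. y \<otimes>\<^bsub>G\<^esub> c) ` S i"
        proof
          fix c assume c: "c \<in> S i"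
          have "inv\<^bsub>G\<^esub> y \<otimes>\<^bsub>G\<^esub> c \<in> S i" using subgroup.m_closed[OF sub[of i] subgroup.m_inv_closed[OF sub[of i] that(1)] c] .
          moreover have "c = y \<otimes>\<^bsub>G\<^esub> (inv\<^bsub>G\<^esub> y \<otimes>\<^bsub>G\<^esub> c)"
            using yc Sc'[OF c] G.m_assoc[of y "inv\<^bsub>G\<^esub> y" c] by simp
          ultimately show "c \<in> (\<lambda>c. y \<otimes>\<^bsub>G\<^esub> c) ` S i" by blast
        qed
      qed
      ultimately show ?thesis by simp
    qed
    then show ?thesis using actt yc that by simp
  qed
  have memb: "g \<in> S i" if "g \<in> carrier G" "act g (i, S i) = (i, S i)" for g i
  proof -
    have "g \<otimes>\<^bsub>G\<^esub> \<one>\<^bsub>G\<^esub> \<in> (\<lambda>c. g \<otimes>\<^bsub>G\<^esub> c) ` S i" using subgroup.one_closed[OF sub[of i]] by blast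
    then show ?thesis using that by (simp add: act_def)
  qed
  have S1: "(\<lambda>c. \<one>\<^bsub>G\<^esub> \<otimes>\<^bsub>G\<^esub> c) ` S i = S i" for i using Sc' by (auto intro!: image_cong)
  have pt: "(i, S i) \<in> Om0" if "i < 3" for i
    unfolding Om0_def using that S1[of i] by (auto intro!: exI[of _ "\<one>\<^bsub>G\<^esub>"])
  have faith: "g = h" if gh: "g \<in> carrier G" "h \<in> carrier G" "\<forall>w\<in>Om0. act g w = act h w" for g h
  proof -
    have "act (inv\<^bsub>G\<^esub> h \<otimes>\<^bsub>G\<^esub> g) (i, S i) = (i, S i)" if "i < 3" for i
    proof -
      have "act (inv\<^bsub>G\<^esub> h \<otimes>\<^bsub>G\<^esub> g) (i, S i) = act (inv\<^bsub>G\<^esub> h) (act h (i, S i))"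
        using mult gh pt that by simp
      also have "\<dots> = act (inv\<^bsub>G\<^esub> h \<otimes>\<^bsub>G\<^esub> h) (i, S i)" using mult[of "inv\<^bsub>G\<^esub> h" h "(i, S i)"] gh(2) pt[OF that] by simp
      also have "\<dots> = (i, S i)" using one pt that gh by simp
      finally show ?thesis .
    qed
    then have "inv\<^bsub>G\<^esub> h \<otimes>\<^bsub>G\<^esub> g \<in> S 0" "inv\<^bsub>G\<^esub> h \<otimes>\<^bsub>G\<^esub> g \<in> S 1"
      using memb gh by auto
    then have "inv\<^bsub>G\<^esub> h \<otimes>\<^bsub>G\<^esub> g = \<one>\<^bsub>G\<^esub>" using AD by blast
    then show ?thesis using gh by (metis G.inv_equality G.inv_inv G.inv_closed)
  qed
  have thbij: "bij_betw th Om0 Om0"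
  proof (rule bij_betwI[where g = "\<lambda>w. if fst w = 2 then act (inv\<^bsub>G\<^esub> x) w else w"])
    show "th \<in> Om0 \<rightarrow> Om0" using closed xc by (auto simp: th_def)
    show "(\<lambda>w. if fst w = 2 then act (inv\<^bsub>G\<^esub> x) w else w) \<in> Om0 \<rightarrow> Om0" using closed xc by auto
    show "(if fst (th w) = 2 then act (inv\<^bsub>G\<^esub> x) (th w) else th w) = w" if "w \<in> Om0" for w
      using that mult[of "inv\<^bsub>G\<^esub> x" x w] one[of w] xc by (auto simp: th_def act_def)
    show "th (if fst w = 2 then act (inv\<^bsub>G\<^esub> x) w else w) = w" if "w \<in> Om0" for w
      using that mult[of x "inv\<^bsub>G\<^esub> x" w] one[of w] xc by (auto simp: th_def act_def)
  qed
  have Om0E: "\<exists>h\<in>carrier G. w = (fst w, (\<lambda>c. h \<otimes>\<^bsub>G\<^esub> c) ` S (fst w))" if w: "w \<in> Om0" for w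
  proof -
    obtain i h where "w = (i, (\<lambda>c. h \<otimes>\<^bsub>G\<^esub> c) ` S i)" "h \<in> carrier G"
      using w unfolding Om0_def by blast
    then show ?thesis by auto
  qed
  have bx: "act b w = act x w" if w: "w \<in> Om0" "fst w = 2" for w
  proof -
    obtain h where h: "h \<in> carrier G" "w = (2, (\<lambda>c. h \<otimes>\<^bsub>G\<^esub> c) ` S 2)"
      using Om0E[OF w(1)] w(2) by auto
    have "x \<otimes>\<^bsub>G\<^esub> (inv\<^bsub>G\<^esub> x \<otimes>\<^bsub>G\<^esub> b) = b"
      using xc bc G.m_assoc[of x "inv\<^bsub>G\<^esub> x" b] by simp
    then have "act b w = act x (act (inv\<^bsub>G\<^esub> x \<otimes>\<^bsub>G\<^esub> b) w)"
      using mult[of x "inv\<^bsub>G\<^esub> x \<otimes>\<^bsub>G\<^esub> b" w] w xc bc by simp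
    also have "act (inv\<^bsub>G\<^esub> x \<otimes>\<^bsub>G\<^esub> b) w = w" using fixS[OF xb h(1)] h by simp
    finally show ?thesis .
  qed
  have bfix: "act b w = w" if w: "w \<in> Om0" "fst w = 1" for w
  proof -
    obtain h where h: "h \<in> carrier G" "w = (1, (\<lambda>c. h \<otimes>\<^bsub>G\<^esub> c) ` S 1)"
      using Om0E[OF w(1)] w(2) by auto
    then show ?thesis using fixS[OF b h(1)] by simp
  qed
  have xfix: "act x w = w" if w: "w \<in> Om0" "fst w = 0" for w
  proof -
    obtain h where h: "h \<in> carrier G" "w = (0, (\<lambda>c. h \<otimes>\<^bsub>G\<^esub> c) ` S 0)"
      using Om0E[OF w(1)] w(2) by auto
    then show ?thesis using fixS[OF x h(1)] by simp
  qed
  have fst3: "fst w < 3" if "w \<in> Om0" for w using that unfolding Om0_def by auto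
  have thcl: "\<exists>g\<in>carrier G. th u = act g u \<and> th v = act g v" if uv: "u \<in> Om0" "v \<in> Om0" for u v
  proof (cases "fst u = 2 \<or> fst v = 2")
    case False
    then show ?thesis using one[OF uv(1)] one[OF uv(2)] by (auto simp: th_def intro!: bexI[of _ "\<one>\<^bsub>G\<^esub>"])
  next
    case True
    show ?thesis
    proof (cases "fst u = 1 \<or> fst v = 1")
      case True2: True
      show ?thesis using True True2 bx[OF uv(1)] bx[OF uv(2)] bfix[OF uv(1)] bfix[OF uv(2)] bc
        by (auto simp: th_def intro!: bexI[of _ b])
    next
      case False
      have "fst u < 3" "fst v < 3" using fst3 uv by auto
      then have "fst u = 0 \<or> fst u = 2" "fst v = 0 \<or> fst v = 2" using False by auto
      then show ?thesis using xfix[OF uv(1)] xfix[OF uv(2)] xc by (auto simp: th_def intro!: bexI[of _ x])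
    qed
  qed
  have thnot: "\<exists>w\<in>Om0. th w \<noteq> act g w" if g: "g \<in> carrier G" for g
  proof (rule ccontr)
    assume "\<not> ?thesis"
    then have all: "\<forall>w\<in>Om0. th w = act g w" by blast
    have "act g (0, S 0) = (0, S 0)" "act g (1, S 1) = (1, S 1)"
      using bspec[OF all pt[of 0]] bspec[OF all pt[of 1]] by (auto simp: th_def)
    then have "g \<in> S 0" "g \<in> S 1" using memb[OF g] by auto
    then have "g = \<one>\<^bsub>G\<^esub>" using AD by blast
    then have "act x (2, S 2) = (2, S 2)" using bspec[OF all pt[of 2]] one[OF pt[of 2]] by (auto simp: th_def)
    then show False using memb[OF xc] xZ by blast
  qed
  show ?thesis
    by (rule transport_not_closed[OF inf G.is_group fin0 closed one mult faith thbij thcl thnot]) auto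
qed



lemma (in comm_group) noncyclic_witness:
  assumes fin: "finite (carrier G)" and p: "Factorial_Ring.prime (p::nat)" and ordG: "order G = p ^ n"
    and nc: "\<not> cyclic_group G"
  shows "\<exists>x\<in>carrier G. \<exists>g\<in>carrier G. generate G {x} \<inter> generate G {g} = {\<one>}
           \<and> x \<notin> generate G {inv g \<otimes> x}"
proof -
  have p1: "p > 1" using p prime_gt_1_nat by blast
  have pp: "\<exists>i. ord a = p ^ i" if "a \<in> carrier G" for a
    using ord_dvd_group_order[OF that] ordG divides_primepow_nat[OF p] by auto
  have ne: "carrier G \<noteq> {}" by auto
  define M where "M = Max (ord ` carrier G)"
  have "M \<in> ord ` carrier G" unfolding M_def using fin ne by simp
  then obtain g where g: "g \<in> carrier G" "ord g = M" by blast
  have gmax: "ord a \<le> ord g" if "a \<in> carrier G" for a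
    using fin that g unfolding M_def by simp
  obtain m where m: "ord g = p ^ m" using pp g by blast
  have dvdg: "ord a dvd ord g" if a: "a \<in> carrier G" for a
  proof -
    obtain i where i: "ord a = p ^ i" using pp a by blast
    have "p ^ i \<le> p ^ m" using gmax[OF a] i m by simp
    then have "i \<le> m" using power_le_imp_le_exp[OF p1] by blast
    then show ?thesis using i m by (simp add: le_imp_power_dvd)
  qed
  define D where "D = generate G {g}"
  have Dsub: "subgroup D G" unfolding D_def using g generate_is_subgroup by simp
  have Dpow: "D = {g [^] k | k. k \<in> (UNIV :: nat set)}"
    unfolding D_def using generate_pow_on_finite_carrier[OF fin g(1)] .
  have oneD: "\<one> \<in> D" using subgroup.one_closed[OF Dsub] by simp
  have "\<exists>h. h \<in> carrier G \<and> h \<notin> D"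
  proof (rule ccontr)
    assume "\<not> ?thesis"
    then have "carrier G \<subseteq> D" by blast
    moreover have "D \<subseteq> carrier G" using subgroup.subset[OF Dsub] .
    ultimately have "carrier G = D" by blast
    also have "D = range (\<lambda>k::int. g [^] k)" unfolding D_def using generate_pow[OF g(1)] by auto
    finally have "cyclic_group G" using cyclic_group g(1) by blast
    then show False using nc by blast
  qed
  then obtain h0 where "h0 \<in> carrier G \<and> h0 \<notin> D" by blast
  from ex_has_least_nat[of "\<lambda>h. h \<in> carrier G \<and> h \<notin> D", OF this, of ord]
  obtain h where h: "h \<in> carrier G" "h \<notin> D" and hmin: "\<And>y. y \<in> carrier G \<Longrightarrow> y \<notin> D \<Longrightarrow> ord h \<le> ord y"
    by blast
  obtain i where i: "ord h = p ^ i" using pp h(1) by blast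
  have "h \<noteq> \<one>" using h oneD by blast
  then have "ord h \<noteq> 1" using ord_eq_1 h(1) by blast
  then have i0: "i \<noteq> 0" using i by auto
  have pdvd: "p dvd ord h" using i i0 by (simp add: dvd_power)
  have "ord (h [^] p) = ord h div p" using ord_pow[OF h(1) pdvd] p1 by simp
  also have "\<dots> < ord h" using i i0 p1 by simp
  finally have "h [^] p \<in> D" using hmin[of "h [^] p"] h(1) by fastforce
  then obtain k :: nat where k: "h [^] p = g [^] k" using Dpow by blast
  have "ord h dvd p ^ m" using dvdg[OF h(1)] m by simp
  then have hpm: "h [^] (p ^ m) = \<one>" using pow_eq_id h(1) by blast
  have m0: "m \<noteq> 0"
  proof
    assume "m = 0"
    then have "ord h dvd 1" using \<open>ord h dvd p ^ m\<close> by simp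
    then show False using \<open>ord h \<noteq> 1\<close> by simp
  qed
  have pm: "p ^ m = p * p ^ (m - 1)" using m0 by (metis power_eq_if)
  have "g [^] (k * p ^ (m - 1)) = (g [^] k) [^] (p ^ (m - 1))" using g(1) by (simp add: nat_pow_pow)
  also have "\<dots> = h [^] (p * p ^ (m - 1))" using k[symmetric] nat_pow_pow[OF h(1), of p "p ^ (m - 1)"] by simp
  also have "\<dots> = \<one>" using hpm pm by simp
  finally have "ord g dvd k * p ^ (m - 1)" using pow_eq_id g(1) by blast
  then have "p * p ^ (m - 1) dvd k * p ^ (m - 1)" using m pm by simp
  then have "p dvd k" using p1 by simp
  then obtain k' where k': "k = p * k'" by blast
  define x where "x = h \<otimes> inv (g [^] k')"
  have xc: "x \<in> carrier G" unfolding x_def using h g by simp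
  have xp: "x [^] p = \<one>"
  proof -
    have "x [^] p = h [^] p \<otimes> (inv (g [^] k')) [^] p" unfolding x_def
      using h g by (simp add: nat_pow_distrib)
    also have "(inv (g [^] k')) [^] p = inv ((g [^] k') [^] p)" using g by (simp add: nat_pow_inv)
    also have "(g [^] k') [^] p = g [^] k" using g k' by (simp add: nat_pow_pow mult.commute)
    finally show ?thesis using k g by simp
  qed
  have xD: "x \<notin> D"
  proof
    assume "x \<in> D"
    moreover have "g [^] k' \<in> D" using Dpow by blast
    ultimately have "x \<otimes> g [^] k' \<in> D" using subgroup.m_closed[OF Dsub] by blast
    moreover have "x \<otimes> g [^] k' = h" unfolding x_def using h g by (simp add: m_assoc)
    ultimately show False using h by simp
  qed
  have key: "p dvd j" if xjD: "x [^] j \<in> D" for j :: nat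
  proof (rule ccontr)
    assume nd: "\<not> p dvd j"
    then have j0: "j \<noteq> 0" by (metis dvd_0_right)
    have "coprime p j" using prime_imp_coprime[OF p nd] .
    then have gcd1: "gcd j p = 1" by (simp add: coprime_iff_gcd_eq_1 gcd.commute)
    obtain u v where uv: "j * u = p * v + gcd j p" using bezout_nat[OF j0] by blast
    have "x [^] (j * u) = x" 
    proof -
      have "x [^] (j * u) = x [^] (p * v) \<otimes> x [^] (1::nat)" using uv gcd1 xc by (simp add: nat_pow_mult)
      also have "x [^] (p * v) = \<one>" using xp xc by (simp add: nat_pow_pow[symmetric])
      finally show ?thesis using xc by simp
    qed
    moreover obtain c :: nat where "x [^] j = g [^] c" using xjD Dpow by blast
    then have "x [^] (j * u) = g [^] (c * u)" using xc g by (simp add: nat_pow_pow[symmetric])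
    ultimately have "x \<in> D" using Dpow by auto
    then show False using xD by blast
  qed
  define XX where "XX = generate G {x}"
  have Xsub: "subgroup XX G" unfolding XX_def using xc generate_is_subgroup by simp
  have Xpow: "XX = {x [^] k | k. k \<in> (UNIV :: nat set)}"
    unfolding XX_def using generate_pow_on_finite_carrier[OF fin xc] .
  have inter: "XX \<inter> D = {\<one>}"
  proof
    show "XX \<inter> D \<subseteq> {\<one>}"
    proof
      fix y assume y: "y \<in> XX \<inter> D"
      then obtain j :: nat where j: "y = x [^] j" using Xpow by blast
      then have "p dvd j" using key y by blast
      then obtain q where "j = p * q" by blast
      then have "y = (x [^] p) [^] q" using j xc by (simp add: nat_pow_pow)
      then show "y \<in> {\<one>}" using xp by simp
    qed
    show "{\<one>} \<subseteq> XX \<inter> D" using oneD subgroup.one_closed[OF Xsub] by blast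
  qed
  have notin: "x \<notin> generate G {inv g \<otimes> x}"
  proof
    define w where "w = inv g \<otimes> x"
    have wc: "w \<in> carrier G" unfolding w_def using g xc by simp
    assume "x \<in> generate G {inv g \<otimes> x}"
    then obtain k :: nat where kk: "x = w [^] k" using generate_pow_on_finite_carrier[OF fin wc] w_def by auto
    have gw: "g \<otimes> w = x" unfolding w_def using g xc by (simp add: m_assoc[symmetric])
    have "g [^] k \<otimes> x = g [^] k \<otimes> w [^] k" using kk by simp
    also have "\<dots> = (g \<otimes> w) [^] k" using g wc by (simp add: nat_pow_distrib)
    finally have eq1: "g [^] k \<otimes> x = x [^] k" using gw by simp
    have eq2: "g [^] k = x [^] k \<otimes> inv x"
      using eq1 g xc by (metis inv_solve_right nat_pow_closed)
    have xX: "x \<in> XX" unfolding XX_def by (rule generate.incl) simp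
    have "x [^] k \<in> XX" using Xpow by blast
    then have "x [^] k \<otimes> inv x \<in> XX"
      using subgroup.m_closed[OF Xsub _ subgroup.m_inv_closed[OF Xsub xX]] by blast
    moreover have "g [^] k \<in> D" using Dpow by blast
    ultimately have "g [^] k \<in> XX \<inter> D" using eq2 by simp
    then have "g [^] k = \<one>" using inter by simp
    then have "ord g dvd k" using pow_eq_id g(1) by blast
    moreover have "p dvd ord g" using m m0 by (simp add: dvd_power)
    ultimately have "p dvd k" using dvd_trans by blast
    then obtain q where q: "k = p * q" by blast
    have "x [^] k = \<one>" using q xp xc by (simp add: nat_pow_pow[symmetric])
    moreover have "x = x [^] k" using eq1 \<open>g [^] k = \<one>\<close> xc by (metis l_one)
    ultimately have "x = \<one>" by simp
    then show False using xD oneD by simp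
  qed
  show ?thesis using xc g(1) inter notin unfolding XX_def D_def by blast
qed



lemma cyclic_closed:
  fixes Om :: "'b set" and H :: "('b \<Rightarrow> 'b) set" and p :: nat
  assumes sub: "subgroup H (BijGroup Om)"
    and cyc: "cyclic_group ((BijGroup Om)\<lparr>carrier := H\<rparr>)"
    and cardH: "card H = p ^ n" and p: "Factorial_Ring.prime p"
  shows "two_closure Om H = H"
proof -
  define K where "K = (BijGroup Om)\<lparr>carrier := H\<rparr>"
  have grpK: "group K" unfolding K_def
    using group.subgroup_imp_group[OF group_BijGroup sub] .
  interpret K: group K by (rule grpK)
  have cK: "carrier K = H" unfolding K_def by simp
  have multK: "f \<otimes>\<^bsub>K\<^esub> h = f \<otimes>\<^bsub>BijGroup Om\<^esub> h" for f h unfolding K_def by simp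
  have oneK: "\<one>\<^bsub>K\<^esub> = (\<lambda>x\<in>Om. x)" unfolding K_def by (simp add: BijGroup_def)
  have HB: "H \<subseteq> Bij Om" using subgroup.subset[OF sub] by (simp add: BijGroup_def)
  have p1: "p > 1" using p prime_gt_1_nat by blast
  have finH: "finite H" using cardH p1 by (metis card_ge_0_finite gr0I power_not_zero not_one_less_zero)
  have app: "(f \<otimes>\<^bsub>K\<^esub> h) x = f (h x)" if "f \<in> H" "h \<in> H" "x \<in> Om" for f h x
    using that HB multK by (auto simp: BijGroup_def compose_def)
  have inOm: "f x \<in> Om" if "f \<in> H" "x \<in> Om" for f x
    using that HB Bij_imp_funcset by blast
  have injH: "inj_on f Om" if "f \<in> H" for f using that HB by (auto simp: Bij_def bij_betw_def)
  have extH: "f \<in> extensional Om" if "f \<in> H" for f using that HB by (auto simp: Bij_def)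
  obtain gam where gam: "gam \<in> carrier K" "subgroup_generated K {gam} = K"
    using cyc unfolding K_def cyclic_group_def by blast
  have ordg: "K.ord gam = p ^ n"
    using K.cyclic_order_is_ord[OF gam(1)] gam(2) cK cardH by (simp add: order_def)
  define P where "P = (\<lambda>k::nat. gam [^]\<^bsub>K\<^esub> k)"
  have PH: "P k \<in> H" for k unfolding P_def using K.nat_pow_closed[OF gam(1)] cK by simp
  have Hpow: "H = range P"
  proof -
    have "H = carrier (subgroup_generated K {gam})" using gam(2) cK by simp
    also have "\<dots> = generate K {gam}" using gam(1) by (simp add: carrier_subgroup_generated)
    also have "\<dots> = range P" unfolding P_def
      using K.generate_pow_on_finite_carrier[OF _ gam(1)] finH cK by auto
    finally show ?thesis .
  qed
  have Padd: "P (a + b) x = P a (P b x)" if "x \<in> Om" for a b x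
  proof -
    have "P (a + b) = P a \<otimes>\<^bsub>K\<^esub> P b" unfolding P_def using gam(1) by (simp add: K.nat_pow_mult)
    then show ?thesis using app PH that by simp
  qed
  have P1: "P k = \<one>\<^bsub>K\<^esub> \<longleftrightarrow> p ^ n dvd k" for k
    unfolding P_def using K.pow_eq_id[OF gam(1)] ordg by simp
  have sub1: "H \<subseteq> two_closure Om H"
    unfolding two_closure_def using HB by blast
  have sub2: "two_closure Om H \<subseteq> H"
  proof
    fix th assume th: "th \<in> two_closure Om H"
    then have thB: "th \<in> Bij Om" and thc: "\<forall>a\<in>Om. \<forall>b\<in>Om. \<exists>f\<in>H. th a = f a \<and> th b = f b"
      unfolding two_closure_def by auto
    have thext: "th \<in> extensional Om" using thB by (simp add: Bij_def)
    show "th \<in> H"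
    proof (cases "n = 0")
      case True
      have "P k = \<one>\<^bsub>K\<^esub>" for k using P1 True by simp
      then have Hone: "H = {\<one>\<^bsub>K\<^esub>}" using Hpow by auto
      have "th = \<one>\<^bsub>K\<^esub>"
      proof (rule extensionalityI[OF thext])
        show "\<one>\<^bsub>K\<^esub> \<in> extensional Om" using oneK by simp
        fix a assume a: "a \<in> Om"
        then obtain f where "f \<in> H" "th a = f a" using thc by blast
        then show "th a = \<one>\<^bsub>K\<^esub> a" using Hone by simp
      qed
      then show ?thesis using Hone by simp
    next
      case False
      define z where "z = P (p ^ (n - 1))"
      have "p ^ (n - 1) < p ^ n" using False p1 by (simp add: power_strict_increasing_iff)
      moreover have "0 < p ^ (n - 1)" using p1 by simp
      ultimately have "\<not> p ^ n dvd p ^ (n - 1)" using nat_dvd_not_less by blast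
      then have "z \<noteq> \<one>\<^bsub>K\<^esub>" unfolding z_def using P1[of "p ^ (n - 1)"] by simp
      have "\<exists>alpha\<in>Om. z alpha \<noteq> alpha"
      proof (rule ccontr)
        assume "\<not> (\<exists>alpha\<in>Om. z alpha \<noteq> alpha)"
        then have zz: "\<forall>x\<in>Om. z x = x" by blast
        have "z = \<one>\<^bsub>K\<^esub>" unfolding oneK
        proof (rule extensionalityI[of _ Om])
          show "z \<in> extensional Om" unfolding z_def using extH[OF PH] .
          show "(\<lambda>x\<in>Om. x) \<in> extensional Om" by simp
          show "z x = (\<lambda>x\<in>Om. x) x" if "x \<in> Om" for x using zz that by simp
        qed
        then show False using \<open>z \<noteq> \<one>\<^bsub>K\<^esub>\<close> by blast
      qed
      then obtain alpha where al: "alpha \<in> Om" "z alpha \<noteq> alpha" by blast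
      define t where "t = (LEAST t. 0 < t \<and> P t alpha = alpha)"
      have "P (p ^ n) = \<one>\<^bsub>K\<^esub>" using P1[of "p ^ n"] by simp
      then have "P (p ^ n) alpha = alpha" using al(1) oneK by simp
      then have ex: "0 < p ^ n \<and> P (p ^ n) alpha = alpha" using p1 by simp
      have t: "0 < t" "P t alpha = alpha" using LeastI[of "\<lambda>t. 0 < t \<and> P t alpha = alpha", OF ex]
        unfolding t_def by auto
      have tmin: "\<not> (0 < s \<and> P s alpha = alpha)" if "s < t" for s
        using that not_less_Least unfolding t_def by blast
      have mult_t: "P (t * q) alpha = alpha" for q
      proof (induction q)
        case 0 show ?case using al oneK P1[of 0] by simp
      next
        case (Suc q)
        have "P (t * Suc q) alpha = P t (P (t * q) alpha)" using Padd al by (simp add: add.commute)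
        then show ?case using Suc t by simp
      qed
      have tdvd: "t dvd k" if "P k alpha = alpha" for k
      proof -
        have "k = k mod t + t * (k div t)" by simp
        then have "P k alpha = P (k mod t) (P (t * (k div t)) alpha)" using Padd al by metis
        then have "P (k mod t) alpha = alpha" using mult_t that by simp
        moreover have "k mod t < t" using t(1) by (rule mod_less_divisor)
        ultimately have "k mod t = 0" using tmin[of "k mod t"] by simp
        then show ?thesis by (simp add: dvd_eq_mod_eq_0)
      qed
      have "t dvd p ^ n" using tdvd ex by blast
      then obtain j where j: "j \<le> n" "t = p ^ j" using divides_primepow_nat[OF p] by blast
      have "t = p ^ n"
      proof (rule ccontr)
        assume "t \<noteq> p ^ n"
        then have "j \<le> n - 1" using j by (cases "j = n") auto
        then have "t dvd p ^ (n - 1)" using j by (simp add: le_imp_power_dvd)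
        then obtain q where "p ^ (n - 1) = t * q" by blast
        then have "z alpha = alpha" unfolding z_def using mult_t by simp
        then show False using al by blast
      qed
      then have stab: "P k = \<one>\<^bsub>K\<^esub>" if "P k alpha = alpha" for k
        using tdvd[OF that] P1[of k] by simp
      obtain f0 where f0: "f0 \<in> H" "th alpha = f0 alpha" using thc al by blast
      have "\<forall>b\<in>Om. th b = f0 b"
      proof
        fix b assume b: "b \<in> Om"
        obtain f where f: "f \<in> H" "th alpha = f alpha" "th b = f b" using thc al b by blast
        define u where "u = inv\<^bsub>K\<^esub> f0 \<otimes>\<^bsub>K\<^esub> f"
        have uH: "u \<in> H" unfolding u_def using f f0 cK by (metis K.inv_closed K.m_closed)
        have f0c: "f0 \<in> carrier K" "f \<in> carrier K" using f f0 cK by auto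
        have fu: "f = f0 \<otimes>\<^bsub>K\<^esub> u" unfolding u_def
          using K.m_assoc[OF f0c(1) K.inv_closed[OF f0c(1)] f0c(2)] f0c by simp
        obtain k where k: "u = P k" using uH Hpow by blast
        have "f0 (u alpha) = f0 alpha" using app[OF f0(1) uH al(1)] fu f f0 by simp
        then have "u alpha = alpha" using injH[OF f0(1)] inOm[OF uH al(1)] al(1) by (meson inj_onD)
        then have "u = \<one>\<^bsub>K\<^esub>" using stab k by simp
        then have "f = f0" using fu f0 cK by simp
        then show "th b = f0 b" using f by simp
      qed
      then have "th = f0" using extensionalityI[OF thext extH[OF f0(1)]] by blast
      then show ?thesis using f0 by simp
    qed
  qed
  show ?thesis using sub1 sub2 by blast
qed



theorem mainTheorem8:
  fixes G :: "('a, 'c) monoid_scheme" and p :: nat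
  assumes "infinite (UNIV :: 'b set)"
    and "Factorial_Ring.prime p"
    and "comm_group G"
    and "finite (carrier G)"
    and "\<exists>n. order G = p ^ n"
  shows "two_closed_group TYPE('b) G \<longleftrightarrow> cyclic_group G"
proof
  interpret G: comm_group G by (rule assms(3))
  obtain n where n: "order G = p ^ n" using assms(5) by blast
  {
    assume tc: "two_closed_group TYPE('b) G"
    show "cyclic_group G"
    proof (rule ccontr)
      assume nc: "\<not> cyclic_group G"
      obtain x g where xg: "x \<in> carrier G" "g \<in> carrier G"
        "generate G {x} \<inter> generate G {g} = {\<one>\<^bsub>G\<^esub>}" "x \<notin> generate G {inv\<^bsub>G\<^esub> g \<otimes>\<^bsub>G\<^esub> x}"
        using G.noncyclic_witness[OF assms(4) assms(2) n nc] by blast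
      define S where "S = (\<lambda>i::nat. if i = 0 then generate G {x} else if i = 1 then generate G {g}
                              else generate G {inv\<^bsub>G\<^esub> g \<otimes>\<^bsub>G\<^esub> x})"
      have sub: "subgroup (S i) G" for i
        unfolding S_def using xg by (auto intro!: G.generate_is_subgroup)
      have x0: "x \<in> S 0" unfolding S_def by (simp add: generate.incl)
      have b1: "g \<in> S 1" unfolding S_def by (simp add: generate.incl)
      have wc: "inv\<^bsub>G\<^esub> g \<otimes>\<^bsub>G\<^esub> x \<in> carrier G" using xg by simp
      have "inv\<^bsub>G\<^esub> (inv\<^bsub>G\<^esub> g \<otimes>\<^bsub>G\<^esub> x) \<in> S 2"
        unfolding S_def using subgroup.m_inv_closed[OF G.generate_is_subgroup[of "{inv\<^bsub>G\<^esub> g \<otimes>\<^bsub>G\<^esub> x}"]] wc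
        by (simp add: generate.incl)
      moreover have "inv\<^bsub>G\<^esub> (inv\<^bsub>G\<^esub> g \<otimes>\<^bsub>G\<^esub> x) = inv\<^bsub>G\<^esub> x \<otimes>\<^bsub>G\<^esub> g"
        using xg by (simp add: G.inv_mult_group)
      ultimately have xb: "inv\<^bsub>G\<^esub> x \<otimes>\<^bsub>G\<^esub> g \<in> S 2" by simp
      have AD: "S 0 \<inter> S 1 = {\<one>\<^bsub>G\<^esub>}" unfolding S_def using xg by simp
      have xZ: "x \<notin> S 2" unfolding S_def using xg by simp
      have "\<not> two_closed_group TYPE('b) G"
        by (rule coset_construction[OF assms(1) assms(3) assms(4) sub x0 b1 xb AD xZ])
      then show False using tc by blast
    qed
  }
  {
    assume cyc: "cyclic_group G"
    show "two_closed_group TYPE('b) G"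
      unfolding two_closed_group_def
    proof (intro allI impI, elim conjE)
      fix Om :: "'b set" and H
      assume sub: "subgroup H (BijGroup Om)" and iso: "(BijGroup Om)\<lparr>carrier := H\<rparr> \<cong> G"
      have grpK: "group ((BijGroup Om)\<lparr>carrier := H\<rparr>)"
        using group.subgroup_imp_group[OF group_BijGroup sub] .
      have cK: "cyclic_group ((BijGroup Om)\<lparr>carrier := H\<rparr>)"
        using isomorphic_group_cyclicity[OF iso grpK G.is_group] cyc by simp
      have "card H = p ^ n" using iso_same_card[OF iso] n by (simp add: order_def)
      then show "two_closure Om H = H" using cyclic_closed[OF sub cK _ assms(2)] by blast
    qed
  }
qed


end
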